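(* Let $f\in\mathbb{Z}[X]$ have degree $n\ge1$ and let $g\in\mathbb{Q}[X]$ be a nonzero divisor of $f$ in $\mathbb{Q}[X]$. Then $\Phi(g):=fg'/g$ lies in $\mathbb{Z}[X]$, has degree less than $n$, and $$\|\Phi(g)\|\le B(f):=2^{n-1}\,n\,\|f\|.$$
   Context: $\|\cdot\|$ denotes the $L^2$ norm of the coefficient vector of a polynomial. *)

theory Defs
  imports Complex_Main "HOL-Computational_Algebra.Polynomial"
begin

definition poly_l2_norm :: "int poly \<Rightarrow> real" where
  "poly_l2_norm p = sqrt (\<Sum>i\<le>degree p. (real_of_int (coeff p i))\<^sup>2)"

definition Phi :: "int poly \<Rightarrow> rat poly \<Rightarrow> rat poly" where
  "Phi f g = (map_poly rat_of_int f * pderiv g) div g"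

end

theory Submission
  imports Defs "Berlekamp_Zassenhaus.Factor_Bound"
begin

definition L1 :: "int poly \<Rightarrow> real" where
  "L1 p = (\<Sum>i\<le>degree p. real_of_int \<bar>Polynomial.coeff p i\<bar>)"

lemma L1_eq: assumes "degree p < M" shows "L1 p = (\<Sum>i<M. real_of_int \<bar>Polynomial.coeff p i\<bar>)"
proof -
  have "{..<M} = {..degree p} \<union> {degree p<..<M}" using assms by auto
  moreover have "(\<Sum>i\<in>{degree p<..<M}. real_of_int \<bar>Polynomial.coeff p i\<bar>) = 0"
    by (rule sum.neutral) (auto simp: coeff_eq_0)
  ultimately show ?thesis unfolding L1_def
    by (simp add: sum.union_disjoint ivl_disj_int)
qed

lemma L1_nonneg: "L1 p \<ge> 0" unfolding L1_def by (intro sum_nonneg) auto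

lemma L1_add: "L1 (p + q) \<le> L1 p + L1 q"
proof -
  define M where "M = Suc (max (degree p) (degree q))"
  have d: "degree (p+q) < M" using degree_add_le_max[of p q] unfolding M_def by auto
  have "L1 (p+q) = (\<Sum>i<M. real_of_int \<bar>Polynomial.coeff p i + Polynomial.coeff q i\<bar>)"
    using L1_eq[OF d] by simp
  also have "\<dots> \<le> (\<Sum>i<M. real_of_int \<bar>Polynomial.coeff p i\<bar> + real_of_int \<bar>Polynomial.coeff q i\<bar>)"
    by (intro sum_mono) (simp add: abs_triangle_ineq flip: of_int_add)
  also have "\<dots> = L1 p + L1 q"
  proof -
    have "L1 p = (\<Sum>i<M. real_of_int \<bar>Polynomial.coeff p i\<bar>)" by (rule L1_eq) (simp add: M_def)
    moreover have "L1 q = (\<Sum>i<M. real_of_int \<bar>Polynomial.coeff q i\<bar>)" by (rule L1_eq) (simp add: M_def)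
    ultimately show ?thesis by (simp only: sum.distrib)
  qed
  finally show ?thesis .
qed

lemma L1_smult: "L1 (Polynomial.smult a p) = \<bar>real_of_int a\<bar> * L1 p"
proof -
  have d: "degree (Polynomial.smult a p) < Suc (degree p)" by (simp add: le_imp_less_Suc)
  show ?thesis using L1_eq[OF d]
    by (simp add: L1_def sum_distrib_left abs_mult lessThan_Suc_atMost)
qed

lemma L1_pCons: "L1 (pCons a p) = real_of_int \<bar>a\<bar> + L1 p"
proof -
  have d: "degree (pCons a p) < Suc (Suc (degree p))" by (simp add: degree_pCons_le le_imp_less_Suc)
  have "L1 (pCons a p) = (\<Sum>i<Suc (Suc (degree p)). real_of_int \<bar>Polynomial.coeff (pCons a p) i\<bar>)"
    by (rule L1_eq[OF d])
  also have "\<dots> = real_of_int \<bar>a\<bar> + (\<Sum>i<Suc (degree p). real_of_int \<bar>Polynomial.coeff p i\<bar>)"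
    by (subst sum.lessThan_Suc_shift) simp
  also have "\<dots> = real_of_int \<bar>a\<bar> + L1 p" by (simp add: L1_def lessThan_Suc_atMost)
  finally show ?thesis .
qed

lemma L1_mult: "L1 (p * q) \<le> L1 p * L1 q"
proof (induction p)
  case (pCons a p)
  have "L1 (pCons a p * q) = L1 (Polynomial.smult a q + pCons 0 (p * q))" by simp
  also have "\<dots> \<le> L1 (Polynomial.smult a q) + L1 (pCons 0 (p * q))" by (rule L1_add)
  also have "\<dots> = \<bar>real_of_int a\<bar> * L1 q + L1 (p * q)" by (simp add: L1_smult L1_pCons)
  also have "\<dots> \<le> \<bar>real_of_int a\<bar> * L1 q + L1 p * L1 q" using pCons.IH by simp
  also have "\<dots> = L1 (pCons a p) * L1 q" by (simp add: L1_pCons algebra_simps)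
  finally show ?case .
qed (simp add: L1_def)

lemma sum_sq_le: fixes f :: "nat \<Rightarrow> real"
  assumes "\<And>i. f i \<ge> 0" shows "(\<Sum>i\<in>A. (f i)\<^sup>2) \<le> (\<Sum>i\<in>A. f i)\<^sup>2"
proof (induction A rule: infinite_finite_induct)
  case (insert x F)
  have "0 \<le> 2 * f x * sum f F" using assms by (simp add: sum_nonneg)
  with insert show ?case by (simp add: power2_eq_square algebra_simps)
qed auto

lemma l2_le_L1: "poly_l2_norm p \<le> L1 p"
proof -
  have "(\<Sum>i\<le>degree p. (real_of_int (Polynomial.coeff p i))\<^sup>2) = (\<Sum>i\<le>degree p. (real_of_int \<bar>Polynomial.coeff p i\<bar>)\<^sup>2)"
    by simp
  also have "\<dots> \<le> (L1 p)\<^sup>2" unfolding L1_def by (rule sum_sq_le) simp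
  finally show ?thesis unfolding poly_l2_norm_def
    using L1_nonneg real_sqrt_le_iff by (metis real_sqrt_abs abs_of_nonneg)
qed

lemma L1_mahler: "L1 p \<le> 2 ^ degree p * mahler_measure p"
proof -
  have "L1 p \<le> (\<Sum>i\<le>degree p. real (degree p choose i) * mahler_measure p)"
    unfolding L1_def by (intro sum_mono Mignotte_bound)
  also have "\<dots> = 2 ^ degree p * mahler_measure p"
    by (simp add: sum_distrib_right[symmetric] flip: of_nat_sum choose_row_sum)
  finally show ?thesis .
qed

lemma L1_pderiv_mahler: assumes "degree p \<ge> 1"
  shows "L1 (pderiv p) \<le> real (degree p) * 2 ^ (degree p - 1) * mahler_measure p"
proof -
  obtain d where d: "degree p = Suc d" using assms by (cases "degree p") auto
  have dd: "degree (pderiv p) < Suc d" using degree_pderiv[of p] d by simp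
  have "L1 (pderiv p) = (\<Sum>i<Suc d. real_of_int \<bar>Polynomial.coeff (pderiv p) i\<bar>)" by (rule L1_eq[OF dd])
  also have "\<dots> = (\<Sum>i<Suc d. real (Suc i) * real_of_int \<bar>Polynomial.coeff p (Suc i)\<bar>)"
    by (intro sum.cong) (auto simp: coeff_pderiv abs_mult)
  also have "\<dots> \<le> (\<Sum>i<Suc d. real (Suc i) * (real (Suc d choose Suc i) * mahler_measure p))"
  proof (intro sum_mono mult_left_mono)
    fix i
    show "real_of_int \<bar>Polynomial.coeff p (Suc i)\<bar> \<le> real (Suc d choose Suc i) * mahler_measure p"
      using Mignotte_bound[of p "Suc i"] d by simp
  qed simp
  also have "\<dots> = (\<Sum>i<Suc d. real (Suc d) * real (d choose i) * mahler_measure p)"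
  proof (intro sum.cong refl)
    fix i
    have "real (Suc i) * real (Suc d choose Suc i) = real (Suc d) * real (d choose i)"
      using Suc_times_binomial[of i d] by (metis of_nat_mult)
    then show "real (Suc i) * (real (Suc d choose Suc i) * mahler_measure p) =
      real (Suc d) * real (d choose i) * mahler_measure p" by (simp add: mult.assoc[symmetric])
  qed
  also have "\<dots> = real (Suc d) * (\<Sum>i\<le>d. real (d choose i)) * mahler_measure p"
    by (simp add: sum_distrib_left sum_distrib_right lessThan_Suc_atMost mult.assoc)
  also have "\<dots> = real (degree p) * 2 ^ (degree p - 1) * mahler_measure p"
    by (simp add: d flip: of_nat_sum choose_row_sum)
  finally show ?thesis .
qed

lemma mahler_mult: "mahler_measure (p * q) = mahler_measure p * mahler_measure q"
  unfolding mahler_measure_def by (simp add: hom_distribs measure_eq_prod)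

lemma mahler_le_l2: "mahler_measure f \<le> poly_l2_norm f"
proof (cases "f = 0")
  case True then show ?thesis by (simp add: poly_l2_norm_def mahler_measure_def)
next
  case False
  have "(\<Sum>a\<leftarrow>coeffs f. a * a) = (\<Sum>i\<le>degree f. (Polynomial.coeff f i)\<^sup>2)"
    using False by (simp add: coeffs_def interv_sum_list_conv_sum_set_nat power2_eq_square
        atLeast0LessThan flip: lessThan_Suc_atMost)
  then show ?thesis using Landau_inequality_mahler_measure[of f]
    by (simp add: poly_l2_norm_def)
qed

theorem corollary4p2:
  fixes f :: "int poly" and g :: "rat poly" and n :: nat
  assumes "degree f = n" and "n \<ge> 1"
    and "g \<noteq> 0" and "g dvd map_poly rat_of_int f"
  shows "\<exists>h :: int poly. map_poly rat_of_int h = Phi f g \<and> degree h < n \<and>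
           poly_l2_norm h \<le> 2 ^ (n - 1) * real n * poly_l2_norm f"
proof -
  from assms(4) obtain h0 where F: "map_poly rat_of_int f = g * h0" by (elim dvdE)
  obtain r rg where ri: "rat_to_normalized_int_poly g = (r, rg)" by force
  note rn = rat_to_normalized_int_poly[OF ri]
  from rat_to_int_factor_explicit[OF F ri] obtain r' where
    fr: "f = rg * Polynomial.smult (content f) r'" by blast
  define q0 where "q0 = Polynomial.smult (content f) r'"
  have fq: "f = rg * q0" using fr q0_def by simp
  have f0: "f \<noteq> 0" using assms(1,2) by auto
  hence rg0: "rg \<noteq> 0" and q00: "q0 \<noteq> 0" using fq by auto
  have degf: "degree rg + degree q0 = n" using fq assms(1) degree_mult_eq[OF rg0 q00] by simp
  define h where "h = q0 * pderiv rg"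
  have g: "g = Polynomial.smult r (map_poly rat_of_int rg)" using rn by simp
  have "map_poly rat_of_int f * pderiv g = g * map_poly rat_of_int h"
    unfolding h_def g by (subst fq) (simp add: hom_distribs of_int_hom.map_poly_pderiv pderiv_smult ac_simps)
  hence Ph: "Phi f g = map_poly rat_of_int h"
    unfolding Phi_def using assms(3) by simp
  have l2f: "0 \<le> poly_l2_norm f" unfolding poly_l2_norm_def by (intro real_sqrt_ge_zero sum_nonneg) auto
  show ?thesis
  proof (cases "degree rg = 0")
    case True
    hence "pderiv rg = 0" by (simp add: pderiv_eq_0_iff)
    hence "h = 0" by (simp add: h_def)
    thus ?thesis using Ph assms(2) l2f by (intro exI[of _ h]) (simp add: poly_l2_norm_def)
  next
    case False
    hence d1: "degree rg \<ge> 1" by simp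
    have "degree h \<le> degree q0 + degree (pderiv rg)" unfolding h_def by (rule degree_mult_le)
    also have "\<dots> < n" using degree_pderiv[of rg] degf d1 by simp
    finally have dh: "degree h < n" .
    have "poly_l2_norm h \<le> L1 h" by (rule l2_le_L1)
    also have "\<dots> \<le> L1 q0 * L1 (pderiv rg)" unfolding h_def by (rule L1_mult)
    also have "\<dots> \<le> (2 ^ degree q0 * mahler_measure q0) *
        (real (degree rg) * 2 ^ (degree rg - 1) * mahler_measure rg)"
      by (intro mult_mono L1_mahler L1_pderiv_mahler d1 L1_nonneg)
        (simp add: mahler_measure_ge_0)
    also have "\<dots> = real (degree rg) * (2 ^ degree q0 * 2 ^ (degree rg - 1)) * mahler_measure f"
      by (simp add: fq mahler_mult)
    also have "2 ^ degree q0 * 2 ^ (degree rg - 1) = (2::real) ^ (n - 1)"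
      using degf d1 by (simp flip: power_add)
    also have "real (degree rg) * 2 ^ (n - 1) * mahler_measure f \<le> real n * 2 ^ (n - 1) * poly_l2_norm f"
      using degf mahler_le_l2[of f] mahler_measure_ge_0[of f]
      by (intro mult_mono) auto
    finally show ?thesis using Ph dh by (intro exI[of _ h]) (simp add: ac_simps)
  qed
qed

end
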